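(* Let $1\le\tau_1<\dots<\tau_m$ be thresholds, $P,Q$ two candidates, and $Z^*$ a point of the metric space minimizing $SC$. If $P$ beats $Q$ under Weighted Majority Rule 4 and $\delta_I=SC(P)/SC(Q)>\tau_m$, then $SC(P)/SC(Z^* )\le\frac{2\delta_I}{\delta_I-\tau_m}$.
   Context: Voters $N$ and candidates are points of an arbitrary metric space $(X,d)$; $SC(Y)=\sum_{i\in N}d(i,Y)$ for $Y\in X$. Set $\tau_0=1/\tau_1$, $\tau_{m+1}=\infty$, $\delta=\max_{0\le l\le m}\frac{\tau_l\tau_{l+1}+2\tau_{l+1}-1}{\tau_l\tau_{l+1}+1}$ (the $l=m$ term meaning $(\tau_m+2)/\tau_m$), and $k\in\{1,\dots,m\}$ with $\tau_k\le\delta<\tau_{k+1}$; $\frac{\tau_{m+1}-\delta}{\tau_{m+1}-1}:=1$. Preference strength of $i$ for $P$ over $Q$ is $\alpha_i^{PQ}=d(i,Q)/d(i,P)$ when $d(i,P)\le d(i,Q)$. $A_l=\{i: d(i,P)\le d(i,Q),\ \tau_l\le\alpha_i^{PQ}<\tau_{l+1}\}$, $B_l=\{j: d(j,Q)\le d(j,P),\ \tau_l\le\alpha_j^{QP}<\tau_{l+1}\}$, $C$ the remaining voters. Weighted Majority Rule 4: for $l<k$ voters in $A_l\cup B_l$ get weight $\frac{(\delta+1)(\tau_l\tau_{l+1}-1)}{(\tau_l+1)(\tau_{l+1}+1)}$; for $l\ge k$ they get weight $\frac{\tau_{l+1}-\delta}{\tau_{l+1}-1}+\frac{\delta\tau_l-1}{\tau_l+1}$;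 voters in $C$ get weight $0$; $P$ beats $Q$ iff the total weight of $\bigcup_lA_l$ is at least that of $\bigcup_lB_l$. *)

theory Defs
  imports "HOL-Analysis.Analysis"
begin

text \<open>Thresholds are given as tau 1, ..., tau m.  The extended thresholds
  tau_0 = 1 / tau_1 and tau_l for 1 <= l <= m; tau_(m+1) = infinity is handled
  separately wherever it occurs.\<close>
definition thr :: "(nat \<Rightarrow> real) \<Rightarrow> nat \<Rightarrow> real" where
  "thr tau l = (if l = 0 then 1 / tau 1 else tau l)"

definition delta_term :: "(nat \<Rightarrow> real) \<Rightarrow> nat \<Rightarrow> nat \<Rightarrow> real" where
  "delta_term tau m l =
     (if l = m then (tau m + 2) / tau m
      else (thr tau l * thr tau (Suc l) + 2 * thr tau (Suc l) - 1)
           / (thr tau l * thr tau (Suc l) + 1))"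

definition wmr_delta :: "(nat \<Rightarrow> real) \<Rightarrow> nat \<Rightarrow> real" where
  "wmr_delta tau m = Max (delta_term tau m ` {0..m})"

definition wmr_k :: "(nat \<Rightarrow> real) \<Rightarrow> nat \<Rightarrow> nat" where
  "wmr_k tau m = (THE k. k \<in> {1..m} \<and> tau k \<le> wmr_delta tau m
                       \<and> (k = m \<or> wmr_delta tau m < tau (Suc k)))"

definition wmr_weight :: "(nat \<Rightarrow> real) \<Rightarrow> nat \<Rightarrow> nat \<Rightarrow> real" where
  "wmr_weight tau m l =
     (let \<delta> = wmr_delta tau m; a = thr tau l; b = thr tau (Suc l) in
      if l < wmr_k tau m then (\<delta> + 1) * (a * b - 1) / ((a + 1) * (b + 1))
      else (if l = m then 1 else (b - \<delta>) / (b - 1)) + (\<delta> * a - 1) / (a + 1))"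

text \<open>A voter at distance dP from P and dQ from Q with dP <= dQ has preference
  strength alpha = dQ / dP for P over Q; band l means tau_l <= alpha < tau_(l+1).
  Written multiplicatively (alpha = infinity when dP = 0, falling in the top band).\<close>
definition in_band :: "(nat \<Rightarrow> real) \<Rightarrow> nat \<Rightarrow> real \<Rightarrow> real \<Rightarrow> nat \<Rightarrow> bool" where
  "in_band tau m dP dQ l \<longleftrightarrow> dP \<le> dQ \<and> thr tau l * dP \<le> dQ
                               \<and> (l = m \<or> dQ < thr tau (Suc l) * dP)"

definition SC :: "'v set \<Rightarrow> ('v \<Rightarrow> 'a::metric_space) \<Rightarrow> 'a \<Rightarrow> real" where
  "SC N loc Y = (\<Sum>i\<in>N. dist (loc i) Y)"

definition setA :: "(nat \<Rightarrow> real) \<Rightarrow> nat \<Rightarrow> 'v set \<Rightarrow> ('v \<Rightarrow> 'a::metric_space) \<Rightarrow> 'a \<Rightarrow> 'a \<Rightarrow> nat \<Rightarrow> 'v set" where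
  "setA tau m N loc P Q l = {i \<in> N. in_band tau m (dist (loc i) P) (dist (loc i) Q) l}"

text \<open>P beats Q under WMR4: total weight of \<Union>A_l >= total weight of \<Union>B_l
  (the A_l are pairwise disjoint, as are the B_l); B_l = A_l with P, Q swapped.\<close>
definition wmr4_beats :: "(nat \<Rightarrow> real) \<Rightarrow> nat \<Rightarrow> 'v set \<Rightarrow> ('v \<Rightarrow> 'a::metric_space) \<Rightarrow> 'a \<Rightarrow> 'a \<Rightarrow> bool" where
  "wmr4_beats tau m N loc P Q \<longleftrightarrow>
     (\<Sum>l\<in>{0..m}. wmr_weight tau m l * real (card (setA tau m N loc P Q l)))
     \<ge> (\<Sum>l\<in>{0..m}. wmr_weight tau m l * real (card (setA tau m N loc Q P l)))"

end

theory Submission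
  imports Defs
begin

lemma fr: "0 < (y::real) \<Longrightarrow> 0 < v \<Longrightarrow> x * v \<le> u * y \<Longrightarrow> x / y \<le> u / v"
  by (simp add: divide_simps)

locale thrs =
  fixes tau :: "nat \<Rightarrow> real" and m :: nat
  assumes m1: "m \<ge> 1"
    and t1: "1 \<le> tau 1"
    and mono: "\<And>i j. 1 \<le> i \<Longrightarrow> i < j \<Longrightarrow> j \<le> m \<Longrightarrow> tau i < tau j"
begin

lemma mono_le: "1 \<le> i \<Longrightarrow> i \<le> j \<Longrightarrow> j \<le> m \<Longrightarrow> tau i \<le> tau j"
  using mono by (cases "i = j") (auto intro: less_imp_le)

lemma tau_ge1: "1 \<le> i \<Longrightarrow> i \<le> m \<Longrightarrow> 1 \<le> tau i"
  using mono_le[of 1 i] t1 by auto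

lemma thr_pos: "l \<le> m \<Longrightarrow> 0 < thr tau l"
  using tau_ge1[of l] t1 m1 by (auto simp: thr_def)

lemma thr_le: "l \<le> m \<Longrightarrow> thr tau l \<le> tau m"
proof -
  assume l: "l \<le> m"
  show ?thesis
  proof (cases "l = 0")
    case True
    have "1 / tau 1 \<le> 1" using t1 by simp
    also have "1 \<le> tau m" using tau_ge1[of m] m1 by simp
    finally show ?thesis using True by (simp add: thr_def)
  qed (use l mono_le[of l m] in \<open>auto simp: thr_def\<close>)
qed

lemma delta_ge: "tau 1 \<le> wmr_delta tau m"
proof -
  have "delta_term tau m 0 = tau 1"
    using m1 t1 by (simp add: delta_term_def thr_def)
  moreover have "delta_term tau m 0 \<le> wmr_delta tau m"
    unfolding wmr_delta_def by (rule Max_ge) auto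
  ultimately show ?thesis by simp
qed

lemma delta_ge1: "1 \<le> wmr_delta tau m"
  using delta_ge t1 by simp

lemma k_props: "wmr_k tau m \<in> {1..m} \<and> tau (wmr_k tau m) \<le> wmr_delta tau m
   \<and> (wmr_k tau m = m \<or> wmr_delta tau m < tau (Suc (wmr_k tau m)))"
proof -
  define \<delta> where "\<delta> = wmr_delta tau m"
  define S where "S = {j \<in> {1..m}. tau j \<le> \<delta>}"
  have fS: "finite S" and neS: "S \<noteq> {}"
    using delta_ge m1 by (auto simp: S_def \<delta>_def)
  define k where "k = Max S"
  have kS: "k \<in> S" using fS neS by (simp add: k_def)
  have P: "k \<in> {1..m} \<and> tau k \<le> \<delta> \<and> (k = m \<or> \<delta> < tau (Suc k))"
  proof -
    have "\<delta> < tau (Suc k)" if "k \<noteq> m"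
    proof (rule ccontr)
      assume "\<not> \<delta> < tau (Suc k)"
      hence "Suc k \<in> S" using kS that by (auto simp: S_def)
      hence "Suc k \<le> k" using fS by (simp add: k_def)
      thus False by simp
    qed
    thus ?thesis using kS by (auto simp: S_def)
  qed
  have U: "x = k" if "x \<in> {1..m} \<and> tau x \<le> \<delta> \<and> (x = m \<or> \<delta> < tau (Suc x))" for x
  proof (rule ccontr)
    assume "x \<noteq> k"
    then consider "x < k" | "k < x" by linarith
    thus False
    proof cases
      case 1
      hence "x \<noteq> m" using P by auto
      hence "\<delta> < tau (Suc x)" using that by auto
      moreover have "tau (Suc x) \<le> tau k" using mono_le[of "Suc x" k] 1 P by auto
      ultimately show False using P by auto
    next
      case 2
      hence "k \<noteq> m" using that by auto
      hence "\<delta> < tau (Suc k)" using P by auto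
      moreover have "tau (Suc k) \<le> tau x" using mono_le[of "Suc k" x] 2 that by auto
      ultimately show False using that by auto
    qed
  qed
  have "wmr_k tau m = k"
    unfolding wmr_k_def \<delta>_def[symmetric]
    by (rule the_equality, rule P, rule U, assumption)
  thus ?thesis using P by (simp add: \<delta>_def)
qed

lemma wm: "wmr_weight tau m m = (wmr_delta tau m + 1) * tau m / (tau m + 1)"
  using k_props tau_ge1[of m] m1
  by (auto simp: wmr_weight_def Let_def thr_def field_simps)

lemma wm_pos: "0 < wmr_weight tau m m"
  using wm delta_ge1 tau_ge1[of m] m1 by simp

lemma w_nonneg: "l \<le> m \<Longrightarrow> 0 \<le> wmr_weight tau m l"
proof -
  assume l: "l \<le> m"
  define \<delta> where "\<delta> = wmr_delta tau m"
  define k where "k = wmr_k tau m"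
  define a where "a = thr tau l"
  define b where "b = thr tau (Suc l)"
  have d1: "1 \<le> \<delta>" using delta_ge1 by (simp add: \<delta>_def)
  have kp: "k \<in> {1..m}" "k = m \<or> \<delta> < tau (Suc k)" using k_props by (auto simp: k_def \<delta>_def)
  have a0: "0 < a" using thr_pos[OF l] by (simp add: a_def)
  show ?thesis
  proof (cases "l < k")
    case True
    have b: "b = tau (Suc l)" "1 \<le> b" using tau_ge1[of "Suc l"] True kp by (auto simp: b_def thr_def)
    have "1 \<le> a * b"
    proof (cases "l = 0")
      case True thus ?thesis using b t1 by (simp add: a_def thr_def)
    next
      case False
      hence "1 \<le> a" using tau_ge1[of l] l by (simp add: a_def thr_def)
      thus ?thesis using b by (metis mult_mono' mult_1 zero_le_one)
    qed
    hence "0 \<le> (\<delta> + 1) * (a * b - 1) / ((a + 1) * (b + 1))"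
      using d1 a0 b by (intro divide_nonneg_pos mult_nonneg_nonneg) auto
    thus ?thesis using True by (simp add: wmr_weight_def Let_def \<delta>_def k_def a_def b_def)
  next
    case False
    hence a: "a = tau l" "1 \<le> a" using kp tau_ge1[of l] l by (auto simp: a_def thr_def)
    have "1 \<le> \<delta> * a" using mult_mono'[of 1 \<delta> 1 a] a d1 by simp
    hence s2: "0 \<le> (\<delta> * a - 1) / (a + 1)"
      using a by (intro divide_nonneg_pos) auto
    show ?thesis
    proof (cases "l = m")
      case True
      thus ?thesis using s2 False by (simp add: wmr_weight_def Let_def \<delta>_def k_def a_def)
    next
      case lm: False
      have "k \<noteq> m" using False l lm by auto
      hence "\<delta> < tau (Suc k)" using kp by auto
      also have "tau (Suc k) \<le> tau (Suc l)" using mono_le[of "Suc k" "Suc l"] False lm l by auto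
      finally have bd: "\<delta> < b" by (simp add: b_def thr_def)
      have "0 \<le> (b - \<delta>) / (b - 1)" using bd d1 by (intro divide_nonneg_pos) auto
      thus ?thesis using s2 False lm by (simp add: wmr_weight_def Let_def \<delta>_def k_def a_def b_def)
    qed
  qed
qed

lemma w_le: "l \<le> m \<Longrightarrow> wmr_weight tau m l \<le> wmr_weight tau m m"
proof -
  assume l: "l \<le> m"
  define \<delta> where "\<delta> = wmr_delta tau m"
  define k where "k = wmr_k tau m"
  define a where "a = thr tau l"
  define b where "b = thr tau (Suc l)"
  define t where "t = tau m"
  have d1: "1 \<le> \<delta>" using delta_ge1 by (simp add: \<delta>_def)
  have t1': "1 \<le> t" using tau_ge1[of m] m1 by (simp add: t_def)
  have kp: "k \<in> {1..m}" using k_props by (auto simp: k_def \<delta>_def)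
  have a0: "0 < a" using thr_pos[OF l] by (simp add: a_def)
  have at: "a \<le> t" using thr_le[OF l] by (simp add: a_def t_def)
  have wmv: "wmr_weight tau m m = (\<delta> + 1) * t / (t + 1)" using wm by (simp add: \<delta>_def t_def)
  show ?thesis
  proof (cases "l < k")
    case True
    have b: "b \<le> t" "1 \<le> b" using tau_ge1[of "Suc l"] mono_le[of "Suc l" m] True kp
      by (auto simp: b_def thr_def t_def)
    have ab: "a * b \<le> a * t" using b a0 by (simp add: mult_left_mono)
    have "(a * b - 1) * (t + 1) \<le> t * ((a + 1) * (b + 1))"
    proof -
      have bt: "0 \<le> b * t" using b t1' by simp
      show ?thesis by (simp add: algebra_simps) (use ab bt t1' in linarith)
    qed
    hence "(a * b - 1) / ((a + 1) * (b + 1)) \<le> t / (t + 1)"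
      using a0 b t1' by (intro fr) (auto simp: mult_ac)
    hence "(\<delta> + 1) * ((a * b - 1) / ((a + 1) * (b + 1))) \<le> (\<delta> + 1) * (t / (t + 1))"
      using d1 by (intro mult_left_mono) auto
    thus ?thesis using True wmv by (simp add: wmr_weight_def Let_def \<delta>_def k_def a_def b_def)
  next
    case False
    have s2: "(\<delta> * a - 1) / (a + 1) \<le> (\<delta> * t - 1) / (t + 1)"
    proof -
      have "(\<delta> + 1) * a \<le> (\<delta> + 1) * t" using at d1 by (intro mult_left_mono) auto
      hence "(\<delta> * a - 1) * (t + 1) \<le> (\<delta> * t - 1) * (a + 1)" by (simp add: algebra_simps)
      thus ?thesis using a0 t1' by (intro fr) auto
    qed
    have wm2: "wmr_weight tau m m = 1 + (\<delta> * t - 1) / (t + 1)"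
      using wmv t1' by (simp add: field_simps)
    show ?thesis
    proof (cases "l = m")
      case True thus ?thesis by simp
    next
      case lm: False
      have b1: "1 \<le> b" using tau_ge1[of "Suc l"] lm l by (simp add: b_def thr_def)
      have s1: "(b - \<delta>) / (b - 1) \<le> 1"
      proof (cases "b = 1")
        case False
        hence "b > 1" using b1 by simp
        thus ?thesis using d1 by (simp add: divide_simps)
      qed simp
      have "wmr_weight tau m l = (b - \<delta>) / (b - 1) + (\<delta> * a - 1) / (a + 1)"
        using False lm by (simp add: wmr_weight_def Let_def \<delta>_def k_def a_def b_def)
      thus ?thesis using s1 s2 wm2 by linarith
    qed
  qed
qed

end

lemma pair_bound:
  fixes x y P Q Z :: "'a::metric_space" and t :: real
  assumes "dist y Q \<le> dist y P" "dist x P \<le> dist x Q" "1 \<le> t"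
  shows "(dist y P - t * dist y Q) + (dist x P - t * dist x Q) \<le> 2 * (dist x Z + dist y Z)"
proof -
  have "t * dist y Q \<ge> dist y Q" "t * dist x Q \<ge> dist x Q"
    using assms(3) by (simp_all add: mult_right_mono[of 1 t, simplified])
  hence "(dist y P - t * dist y Q) + (dist x P - t * dist x Q)
        \<le> (dist y P - dist y Q) + (dist x P - dist x Q)" by linarith
  also have "\<dots> \<le> 2 * dist x y"
  proof -
    have "dist y P \<le> dist y x + dist x P" by (rule dist_triangle)
    moreover have "dist x Q \<le> dist x y + dist y Q" by (rule dist_triangle)
    moreover have "dist y x = dist x y" by (simp add: dist_commute)
    ultimately show ?thesis using assms(2) by linarith
  qed
  also have "\<dots> \<le> 2 * (dist x Z + dist y Z)"
    using dist_triangle[of x y Z] dist_triangle[of x Z y] by (simp add: dist_commute)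
  finally show ?thesis .
qed

lemma band_disj:
  assumes T: "thrs tau m" and l: "l < l'" "l' \<le> m"
  shows "setA tau m N loc X Y l \<inter> setA tau m N loc X Y l' = {}"
proof -
  interpret thrs tau m by (rule T)
  have th: "thr tau (Suc l) \<le> thr tau l'"
  proof -
    have "l' \<noteq> 0" using l by simp
    thus ?thesis using mono_le[of "Suc l" l'] l by (simp add: thr_def)
  qed
  show ?thesis
  proof (rule ccontr)
    assume "\<not> ?thesis"
    then obtain i where i: "i \<in> setA tau m N loc X Y l" "i \<in> setA tau m N loc X Y l'" by blast
    let ?p = "dist (loc i) X" and ?q = "dist (loc i) Y"
    have "?q < thr tau (Suc l) * ?p" "thr tau l' * ?p \<le> ?q"
      using i l by (auto simp: setA_def in_band_def)
    moreover have "thr tau (Suc l) * ?p \<le> thr tau l' * ?p"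
      using th by (simp add: mult_right_mono)
    ultimately show False by linarith
  qed
qed

theorem mainTheorem19:
  fixes tau :: "nat \<Rightarrow> real" and m :: nat
    and N :: "'v set" and loc :: "'v \<Rightarrow> 'a::metric_space"
    and P Q Zs :: 'a
  assumes "finite N"
    and "m \<ge> 1"
    and "1 \<le> tau 1"
    and "\<And>i j. 1 \<le> i \<Longrightarrow> i < j \<Longrightarrow> j \<le> m \<Longrightarrow> tau i < tau j"
    and "\<And>Y. SC N loc Zs \<le> SC N loc Y"
    and "wmr4_beats tau m N loc P Q"
    and "SC N loc P / SC N loc Q > tau m"
  shows "SC N loc P / SC N loc Zs
           \<le> 2 * (SC N loc P / SC N loc Q) / (SC N loc P / SC N loc Q - tau m)"
proof -
  interpret thrs tau m using assms(2,3,4) by unfold_locales auto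
  define dP where "dP i = dist (loc i) P" for i
  define dQ where "dQ i = dist (loc i) Q" for i
  define dZ where "dZ i = dist (loc i) Zs" for i
  define t where "t = tau m"
  define w where "w l = wmr_weight tau m l" for l
  define A' where "A' = {i \<in> N. dP i \<le> dQ i}"
  define Bm where "Bm = setA tau m N loc Q P m"
  have t1': "1 \<le> t" using tau_ge1[of m] assms(2) by (simp add: t_def)
  have fin: "finite (setA tau m N loc X Y l)" for X Y l
    using assms(1) by (simp add: setA_def)
  have cardB: "card Bm \<le> card A'"
  proof -
    have UA: "(\<Union>l\<in>{0..m}. setA tau m N loc P Q l) \<subseteq> A'"
      by (auto simp: setA_def in_band_def A'_def dP_def dQ_def)
    have "(\<Sum>l\<in>{0..m}. card (setA tau m N loc P Q l)) = card (\<Union>l\<in>{0..m}. setA tau m N loc P Q l)"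
    proof (rule card_UN_disjoint[symmetric])
      show "\<forall>i\<in>{0..m}. \<forall>j\<in>{0..m}. i \<noteq> j \<longrightarrow> setA tau m N loc P Q i \<inter> setA tau m N loc P Q j = {}"
      proof (intro ballI impI)
        fix i j assume "i \<in> {0..m}" "j \<in> {0..m}" "i \<noteq> j"
        then consider "i < j" "j \<le> m" | "j < i" "i \<le> m" by force
        thus "setA tau m N loc P Q i \<inter> setA tau m N loc P Q j = {}"
        proof cases
          case 1 thus ?thesis using band_disj[OF thrs_axioms, where l=i and l'=j] by simp
        next
          case 2 thus ?thesis using band_disj[OF thrs_axioms, where l=j and l'=i] by (simp add: Int_commute)
        qed
      qed
    qed (use fin in auto)
    also have "\<dots> \<le> card A'"
      by (rule card_mono) (use UA assms(1) in \<open>auto simp: A'_def\<close>)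
    finally have cs: "(\<Sum>l\<in>{0..m}. real (card (setA tau m N loc P Q l))) \<le> real (card A')"
      by (simp only: of_nat_le_iff of_nat_sum[symmetric])
    have "w m * real (card Bm) \<le> (\<Sum>l\<in>{0..m}. w l * real (card (setA tau m N loc Q P l)))"
      unfolding Bm_def
      by (rule member_le_sum[where f = "\<lambda>l. w l * real (card (setA tau m N loc Q P l))"])
         (auto simp: w_def intro!: mult_nonneg_nonneg w_nonneg)
    also have "\<dots> \<le> (\<Sum>l\<in>{0..m}. w l * real (card (setA tau m N loc P Q l)))"
      using assms(6) by (simp add: wmr4_beats_def w_def)
    also have "\<dots> \<le> (\<Sum>l\<in>{0..m}. w m * real (card (setA tau m N loc P Q l)))"
      by (rule sum_mono) (auto simp: w_def intro!: mult_right_mono w_le)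
    also have "\<dots> = w m * (\<Sum>l\<in>{0..m}. real (card (setA tau m N loc P Q l)))"
      by (simp add: sum_distrib_left)
    also have "\<dots> \<le> w m * real (card A')"
      using cs wm_pos by (intro mult_left_mono) (auto simp: w_def)
    finally have "w m * real (card Bm) \<le> w m * real (card A')" .
    hence "real (card Bm) \<le> real (card A')" using wm_pos by (simp add: w_def)
    thus ?thesis by simp
  qed
  define D where "D = Bm - A'"
  define E where "E = A' - Bm"
  have DN: "D \<subseteq> N" and EN: "E \<subseteq> N" by (auto simp: D_def E_def Bm_def setA_def A'_def)
  have finD: "finite D" "finite E"
    using finite_subset[OF DN assms(1)] finite_subset[OF EN assms(1)] by auto
  have "card D \<le> card E"
  proof -
    have fA: "finite A'" "finite Bm" using assms(1) by (auto simp: Bm_def setA_def A'_def)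
    have "card D = card Bm - card (Bm \<inter> A')" unfolding D_def using fA by (simp add: card_Diff_subset_Int)
    moreover have "card E = card A' - card (A' \<inter> Bm)" unfolding E_def using fA by (simp add: card_Diff_subset_Int)
    ultimately show ?thesis using cardB by (simp add: Int_commute)
  qed
  then obtain f where fD: "f ` D \<subseteq> E" and injf: "inj_on f D"
    using card_le_inj[OF finD] by blast
  define g where "g i = dP i - t * dQ i" for i
  have Bm_iff: "i \<in> Bm \<longleftrightarrow> i \<in> N \<and> dQ i \<le> dP i \<and> t * dQ i \<le> dP i" for i
    using assms(2) by (auto simp: Bm_def setA_def in_band_def thr_def t_def dP_def dQ_def)
  have gneg: "g i \<le> 0" if "i \<in> N" "i \<notin> D" for i
  proof -
    have "t * dQ i \<ge> dQ i" using t1' by (simp add: mult_right_mono[of 1 t, simplified] dQ_def)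
    moreover have "i \<in> A' \<or> i \<notin> Bm" using that by (auto simp: D_def)
    ultimately show ?thesis using that Bm_iff[of i] by (auto simp: g_def A'_def)
  qed
  have disj: "D \<inter> f ` D = {}" using fD by (auto simp: D_def E_def)
  have e1: "SC N loc P - t * SC N loc Q = (\<Sum>i\<in>N. g i)"
    by (simp add: SC_def g_def dP_def dQ_def sum_subtractf sum_distrib_left)
  have e2: "(\<Sum>i\<in>N. g i) = (\<Sum>i\<in>D. g i) + (\<Sum>i\<in>N - D. g i)"
    using sum.subset_diff[OF DN assms(1), of g] by simp
  have e3: "(\<Sum>i\<in>N - D. g i) \<le> (\<Sum>i\<in>f ` D. g i)"
  proof -
    have sub: "f ` D \<subseteq> N - D" using fD disj EN by auto
    have "(\<Sum>i\<in>N - D. g i) = (\<Sum>i\<in>f ` D. g i) + (\<Sum>i\<in>(N - D) - f ` D. g i)"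
      using sum.subset_diff[OF sub finite_Diff[OF assms(1)], of g] by simp
    moreover have "(\<Sum>i\<in>(N - D) - f ` D. g i) \<le> 0"
      by (rule sum_nonpos) (use gneg in auto)
    ultimately show ?thesis by linarith
  qed
  have e4: "(\<Sum>i\<in>f ` D. g i) = (\<Sum>j\<in>D. g (f j))"
    using injf by (simp add: sum.reindex)
  have e5: "(\<Sum>j\<in>D. g j + g (f j)) \<le> (\<Sum>j\<in>D. 2 * (dZ (f j) + dZ j))"
  proof (rule sum_mono)
    fix j assume j: "j \<in> D"
    hence "f j \<in> E" using fD by auto
    hence h1: "dP (f j) \<le> dQ (f j)" by (auto simp: E_def A'_def)
    have h2: "dQ j \<le> dP j" using j Bm_iff by (auto simp: D_def)
    have "(dist (loc j) P - t * dist (loc j) Q) + (dist (loc (f j)) P - t * dist (loc (f j)) Q)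
          \<le> 2 * (dist (loc (f j)) Zs + dist (loc j) Zs)"
      by (rule pair_bound) (use h1 h2 t1' in \<open>simp_all add: dP_def dQ_def\<close>)
    thus "g j + g (f j) \<le> 2 * (dZ (f j) + dZ j)" unfolding g_def dP_def dQ_def dZ_def by linarith
  qed
  have e5': "(\<Sum>j\<in>D. g j + g (f j)) = (\<Sum>i\<in>D. g i) + (\<Sum>j\<in>D. g (f j))"
    by (rule sum.distrib)
  have e6: "(\<Sum>j\<in>D. 2 * (dZ (f j) + dZ j)) = 2 * ((\<Sum>j\<in>D. dZ j) + (\<Sum>i\<in>f ` D. dZ i))"
  proof -
    have "(\<Sum>i\<in>f ` D. dZ i) = (\<Sum>j\<in>D. dZ (f j))" using injf by (simp add: sum.reindex)
    moreover have "(\<Sum>j\<in>D. 2 * (dZ (f j) + dZ j)) = 2 * ((\<Sum>j\<in>D. dZ j) + (\<Sum>j\<in>D. dZ (f j)))"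
      unfolding sum_distrib_left[symmetric] sum.distrib by simp
    ultimately show ?thesis by simp
  qed
  have e7: "(\<Sum>j\<in>D. dZ j) + (\<Sum>i\<in>f ` D. dZ i) \<le> (\<Sum>i\<in>N. dZ i)"
  proof -
    have "(\<Sum>j\<in>D. dZ j) + (\<Sum>i\<in>f ` D. dZ i) = (\<Sum>i\<in>D \<union> f ` D. dZ i)"
      using disj finD by (simp add: sum.union_disjoint)
    also have "\<dots> \<le> (\<Sum>i\<in>N. dZ i)"
      by (rule sum_mono2) (use assms(1) DN fD EN in \<open>auto simp: dZ_def\<close>)
    finally show ?thesis .
  qed
  have key: "SC N loc P - t * SC N loc Q \<le> 2 * SC N loc Zs"
  proof -
    have "SC N loc P - t * SC N loc Q = (\<Sum>i\<in>D. g i) + (\<Sum>i\<in>N - D. g i)"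
      using e1 e2 by simp
    also have "\<dots> \<le> (\<Sum>i\<in>D. g i) + (\<Sum>j\<in>D. g (f j))"
      using e3 e4 by simp
    also have "\<dots> = (\<Sum>j\<in>D. g j + g (f j))" using e5' by simp
    also have "\<dots> \<le> (\<Sum>j\<in>D. 2 * (dZ (f j) + dZ j))" by (rule e5)
    also have "\<dots> = 2 * ((\<Sum>j\<in>D. dZ j) + (\<Sum>i\<in>f ` D. dZ i))" by (rule e6)
    also have "\<dots> \<le> 2 * (\<Sum>i\<in>N. dZ i)" using e7 by simp
    also have "\<dots> = 2 * SC N loc Zs" by (simp add: SC_def dZ_def)
    finally show ?thesis .
  qed
  define sP where "sP = SC N loc P"
  define sQ where "sQ = SC N loc Q"
  define sZ where "sZ = SC N loc Zs"
  have key': "sP - t * sQ \<le> 2 * sZ" using key by (simp add: sP_def sQ_def sZ_def)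
  have gt: "sP / sQ > t" using assms(7) by (simp add: sP_def sQ_def t_def)
  have sQ0: "sQ > 0"
  proof -
    have "sQ \<ge> 0" by (simp add: sQ_def SC_def sum_nonneg)
    moreover have "sQ \<noteq> 0" using gt t1' by auto
    ultimately show ?thesis by simp
  qed
  have sZ0: "sZ \<ge> 0" by (simp add: sZ_def SC_def sum_nonneg)
  define d where "d = sP / sQ"
  have sPd: "sP = d * sQ" using sQ0 by (simp add: d_def)
  have dt: "d > t" using gt by (simp add: d_def)
  have "sP / sZ \<le> 2 * d / (d - t)"
  proof (cases "sZ = 0")
    case True thus ?thesis using dt t1' by simp
  next
    case False
    hence sZp: "sZ > 0" using sZ0 by simp
    have "sP * (d - t) = d * (sP - t * sQ)" using sPd by (simp add: algebra_simps)
    also have "\<dots> \<le> d * (2 * sZ)" using key' dt t1' by (intro mult_left_mono) auto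
    finally have "sP * (d - t) \<le> 2 * d * sZ" by simp
    thus ?thesis using sZp dt by (intro fr) auto
  qed
  thus ?thesis by (simp add: d_def sP_def sQ_def sZ_def t_def)
qed

end
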